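(* Let $k\ge 0$ be an integer and let $G$ be a finite graph (parallel edges allowed, no loops). Let $u_0\in V(G)$ and let $u_1,u_2$ be two distinct neighbors of $u_0$. Let $H$ be the graph obtained from $G$ by deleting all edges with one end $u_0$ and the other end $u_1$ or $u_2$, and let $\kappa$ be a $k$-edge-coloring of $H$. For $i=1,2$ let $m_i$ be the number of edges of $G$ with ends $u_0$ and $u_i$, and for $i=0,1,2$ let $S_i$ be the set of colors $\kappa(f)$ over all edges $f$ of $H$ incident with $u_i$. If $m_1+|S_0\cup S_1|\le k$, $m_2+|S_0\cup S_2|\le k$ and $m_1+m_2+|S_0\cup(S_1\cap S_2)|\le k$, then $\kappa$ can be extended to a $k$-edge-coloring of $G$.
   Context: A $k$-edge-coloring of a graph is a map $\kappa:E\to\{1,\dots,k\}$ such that $\kappa(e)\neq\kappa(f)$ for any two distinct edges $e,f$ sharing at least one end (parallel edges sharing both ends must receive different colors). *)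

theory Defs
  imports Main
begin

definition multigraph :: "'v set \<Rightarrow> 'e set \<Rightarrow> ('e \<Rightarrow> 'v set) \<Rightarrow> bool" where
  "multigraph V E ends \<longleftrightarrow> finite V \<and> finite E \<and>
     (\<forall>e\<in>E. ends e \<subseteq> V \<and> card (ends e) = 2)"

definition edge_coloring :: "nat \<Rightarrow> 'e set \<Rightarrow> ('e \<Rightarrow> 'v set) \<Rightarrow> ('e \<Rightarrow> nat) \<Rightarrow> bool" where
  "edge_coloring k E ends \<kappa> \<longleftrightarrow>
     (\<forall>e\<in>E. \<kappa> e \<in> {1..k}) \<and>
     (\<forall>e\<in>E. \<forall>f\<in>E. e \<noteq> f \<and> ends e \<inter> ends f \<noteq> {} \<longrightarrow> \<kappa> e \<noteq> \<kappa> f)"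

end

theory Submission
  imports Defs
begin

lemma pick2:
  assumes "finite F1" "finite F2" "m1 \<le> card F1" "m2 \<le> card F2" "m1 + m2 \<le> card (F1 \<union> F2)"
  shows "\<exists>X1 X2. X1 \<subseteq> F1 \<and> X2 \<subseteq> F2 \<and> X1 \<inter> X2 = {} \<and> card X1 = m1 \<and> card X2 = m2"
proof (cases "m1 \<le> card (F1 - F2)")
  case True
  then obtain X1 where X1: "X1 \<subseteq> F1 - F2" "card X1 = m1" by (meson obtain_subset_with_card_n)
  obtain X2 where X2: "X2 \<subseteq> F2" "card X2 = m2" using assms(4) by (meson obtain_subset_with_card_n)
  show ?thesis using X1 X2 by (intro exI[of _ X1] exI[of _ X2]) auto
next
  case False
  have cF1: "card F1 = card (F1 - F2) + card (F1 \<inter> F2)"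
    using assms(1) by (metis Diff_Diff_Int Diff_disjoint Int_lower1 card_Un_disjoint finite_Diff finite_Int Un_Diff_Int inf_commute)
  have cU: "card (F1 \<union> F2) = card (F1 - F2) + card F2"
    using assms(1,2) by (metis Un_Diff_cancel2 card_Un_disjoint finite_Diff Diff_disjoint inf_commute)
  obtain Y where Y: "Y \<subseteq> F1 \<inter> F2" "card Y = m1 - card (F1 - F2)"
    using cF1 assms(3) by (metis add_diff_cancel_left' diff_le_mono obtain_subset_with_card_n)
  have fY: "finite Y" using Y assms(2) by (meson finite_Int finite_subset)
  have "card (F2 - Y) = card F2 - card Y" using Y fY by (meson card_Diff_subset le_infE)
  hence "m2 \<le> card (F2 - Y)" using Y cU assms(5) False by linarith
  then obtain X2 where X2: "X2 \<subseteq> F2 - Y" "card X2 = m2" by (meson obtain_subset_with_card_n)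
  have "card ((F1 - F2) \<union> Y) = card (F1 - F2) + card Y"
    using fY assms(1) Y by (intro card_Un_disjoint) auto
  hence "card ((F1 - F2) \<union> Y) = m1" using Y False by linarith
  thus ?thesis using X2 Y by (intro exI[of _ "(F1 - F2) \<union> Y"] exI[of _ X2]) auto
qed

theorem lemma4:
  fixes k :: nat and V :: "'v set" and E :: "'e set" and ends :: "'e \<Rightarrow> 'v set"
    and u0 u1 u2 :: 'v and \<kappa> :: "'e \<Rightarrow> nat"
  assumes G: "multigraph V E ends"
    and u0: "u0 \<in> V"
    and nb1: "\<exists>e\<in>E. ends e = {u0, u1}"
    and nb2: "\<exists>e\<in>E. ends e = {u0, u2}"
    and dist: "u1 \<noteq> u2"
    and col: "edge_coloring k {e\<in>E. ends e \<noteq> {u0, u1} \<and> ends e \<noteq> {u0, u2}} ends \<kappa>"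
    and c1: "card {e\<in>E. ends e = {u0, u1}}
             + card (\<kappa> ` {f\<in>E. ends f \<noteq> {u0, u1} \<and> ends f \<noteq> {u0, u2} \<and> u0 \<in> ends f}
                   \<union> \<kappa> ` {f\<in>E. ends f \<noteq> {u0, u1} \<and> ends f \<noteq> {u0, u2} \<and> u1 \<in> ends f}) \<le> k"
    and c2: "card {e\<in>E. ends e = {u0, u2}}
             + card (\<kappa> ` {f\<in>E. ends f \<noteq> {u0, u1} \<and> ends f \<noteq> {u0, u2} \<and> u0 \<in> ends f}
                   \<union> \<kappa> ` {f\<in>E. ends f \<noteq> {u0, u1} \<and> ends f \<noteq> {u0, u2} \<and> u2 \<in> ends f}) \<le> k"
    and c3: "card {e\<in>E. ends e = {u0, u1}} + card {e\<in>E. ends e = {u0, u2}}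
             + card (\<kappa> ` {f\<in>E. ends f \<noteq> {u0, u1} \<and> ends f \<noteq> {u0, u2} \<and> u0 \<in> ends f}
                   \<union> (\<kappa> ` {f\<in>E. ends f \<noteq> {u0, u1} \<and> ends f \<noteq> {u0, u2} \<and> u1 \<in> ends f}
                      \<inter> \<kappa> ` {f\<in>E. ends f \<noteq> {u0, u1} \<and> ends f \<noteq> {u0, u2} \<and> u2 \<in> ends f})) \<le> k"
  shows "\<exists>\<kappa>'. edge_coloring k E ends \<kappa>' \<and>
           (\<forall>e\<in>{e\<in>E. ends e \<noteq> {u0, u1} \<and> ends e \<noteq> {u0, u2}}. \<kappa>' e = \<kappa> e)"
proof -
  define H where "H = {e\<in>E. ends e \<noteq> {u0, u1} \<and> ends e \<noteq> {u0, u2}}"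
  define E1 where "E1 = {e\<in>E. ends e = {u0, u1}}"
  define E2 where "E2 = {e\<in>E. ends e = {u0, u2}}"
  define S0 where "S0 = \<kappa> ` {f\<in>E. ends f \<noteq> {u0, u1} \<and> ends f \<noteq> {u0, u2} \<and> u0 \<in> ends f}"
  define S1 where "S1 = \<kappa> ` {f\<in>E. ends f \<noteq> {u0, u1} \<and> ends f \<noteq> {u0, u2} \<and> u1 \<in> ends f}"
  define S2 where "S2 = \<kappa> ` {f\<in>E. ends f \<noteq> {u0, u1} \<and> ends f \<noteq> {u0, u2} \<and> u2 \<in> ends f}"
  have fE: "finite E" using G unfolding multigraph_def by auto
  have fE1: "finite E1" "finite E2" using fE unfolding E1_def E2_def by auto
  have colH: "\<And>e. e \<in> H \<Longrightarrow> \<kappa> e \<in> {1..k}" using col[unfolded edge_coloring_def, THEN conjunct1] unfolding H_def by blast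
  have S0s: "S0 \<subseteq> {1..k}" using colH unfolding S0_def H_def by blast
  have S1s: "S1 \<subseteq> {1..k}" using colH unfolding S1_def H_def by blast
  have S2s: "S2 \<subseteq> {1..k}" using colH unfolding S2_def H_def by blast
  define F1 where "F1 = {1..k} - (S0 \<union> S1)"
  define F2 where "F2 = {1..k} - (S0 \<union> S2)"
  have "card F1 = k - card (S0 \<union> S1)" unfolding F1_def using S0s S1s
    by (subst card_Diff_subset) (auto intro: finite_subset)
  hence m1: "card E1 \<le> card F1" using c1 unfolding E1_def S0_def S1_def by linarith
  have "card F2 = k - card (S0 \<union> S2)" unfolding F2_def using S0s S2s
    by (subst card_Diff_subset) (auto intro: finite_subset)
  hence m2: "card E2 \<le> card F2" using c2 unfolding E2_def S0_def S2_def by linarith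
  have "F1 \<union> F2 = {1..k} - (S0 \<union> (S1 \<inter> S2))" unfolding F1_def F2_def by blast
  moreover have "card ({1..k} - (S0 \<union> (S1 \<inter> S2))) = k - card (S0 \<union> (S1 \<inter> S2))" using S0s S1s S2s
    by (subst card_Diff_subset) (auto intro: finite_subset)
  moreover have "card E1 + card E2 + card (S0 \<union> (S1 \<inter> S2)) \<le> k"
    using c3 unfolding E1_def E2_def S0_def S1_def S2_def .
  ultimately have m12: "card E1 + card E2 \<le> card (F1 \<union> F2)" by simp
  obtain X1 X2 where X: "X1 \<subseteq> F1" "X2 \<subseteq> F2" "X1 \<inter> X2 = {}" "card X1 = card E1" "card X2 = card E2"
    using pick2[OF _ _ m1 m2 m12] unfolding F1_def F2_def by auto
  have fX: "finite X1" "finite X2" using X unfolding F1_def F2_def by (auto intro: finite_subset)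
  obtain g1 where g1: "bij_betw g1 E1 X1" using fE1 fX X by (metis finite_same_card_bij)
  obtain g2 where g2: "bij_betw g2 E2 X2" using fE1 fX X by (metis finite_same_card_bij)
  define \<kappa>' where "\<kappa>' = (\<lambda>e. if e \<in> E1 then g1 e else if e \<in> E2 then g2 e else \<kappa> e)"
  have d12: "u1 \<noteq> u2" by (fact dist)
  have E12: "E1 \<inter> E2 = {}" unfolding E1_def E2_def using d12 by (auto simp: doubleton_eq_iff)
  have cases: "\<And>e. e \<in> E \<Longrightarrow> e \<in> E1 \<or> e \<in> E2 \<or> e \<in> H" unfolding E1_def E2_def H_def by auto
  have HE1: "H \<inter> E1 = {}" "H \<inter> E2 = {}" unfolding H_def E1_def E2_def by auto
  have k1: "\<And>e. e \<in> E1 \<Longrightarrow> \<kappa>' e \<in> X1" using g1 unfolding \<kappa>'_def bij_betw_def by auto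
  have k2: "\<And>e. e \<in> E2 \<Longrightarrow> \<kappa>' e \<in> X2" using g2 E12 unfolding \<kappa>'_def bij_betw_def by auto
  have kH: "\<And>e. e \<in> H \<Longrightarrow> \<kappa>' e = \<kappa> e" using HE1 unfolding \<kappa>'_def by auto
  have i1: "inj_on \<kappa>' E1" using g1 unfolding bij_betw_def \<kappa>'_def inj_on_def by auto
  have i2: "inj_on \<kappa>' E2" using g2 E12 unfolding bij_betw_def \<kappa>'_def inj_on_def by auto
  have HS1: "\<And>f. f \<in> H \<Longrightarrow> {u0, u1} \<inter> ends f \<noteq> {} \<Longrightarrow> \<kappa> f \<in> S0 \<union> S1"
    unfolding H_def S0_def S1_def by blast
  have HS2: "\<And>f. f \<in> H \<Longrightarrow> {u0, u2} \<inter> ends f \<noteq> {} \<Longrightarrow> \<kappa> f \<in> S0 \<union> S2"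
    unfolding H_def S0_def S2_def by blast
  have colH2: "\<And>e f. e \<in> H \<Longrightarrow> f \<in> H \<Longrightarrow> e \<noteq> f \<Longrightarrow> ends e \<inter> ends f \<noteq> {} \<Longrightarrow> \<kappa> e \<noteq> \<kappa> f"
    using col[unfolded edge_coloring_def, THEN conjunct2] unfolding H_def by blast
  have asym: "\<kappa>' e \<noteq> \<kappa>' f" if eE: "e \<in> E1 \<union> E2" "f \<in> E" "e \<noteq> f" "ends e \<inter> ends f \<noteq> {}" for e f
  proof -
    consider "e \<in> E1" | "e \<in> E2" using eE(1) by blast
    thus ?thesis
    proof cases
      case 1
      note e1 = 1
      have ee: "ends e = {u0, u1}" using 1 unfolding E1_def by auto
      from cases[OF eE(2)] consider "f \<in> E1" | "f \<in> E2" | "f \<in> H" by blast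
      thus ?thesis
      proof cases
        case 1
        thus ?thesis using inj_on_eq_iff[OF i1 e1 1] eE(3) by simp
      next
        case 2
        thus ?thesis using k1[OF e1] k2[OF 2] X(3) by (metis IntI empty_iff)
      next
        case 3
        have "{u0, u1} \<inter> ends f \<noteq> {}" using eE(4) unfolding ee .
        hence "\<kappa>' f \<in> S0 \<union> S1" using HS1[OF 3] kH[OF 3] by simp
        moreover have "\<kappa>' e \<in> F1" using k1[OF e1] X(1) by blast
        ultimately show ?thesis unfolding F1_def by (metis DiffD2)
      qed
    next
      case 2
      note e2 = 2
      have ee: "ends e = {u0, u2}" using 2 unfolding E2_def by auto
      from cases[OF eE(2)] consider "f \<in> E1" | "f \<in> E2" | "f \<in> H" by blast
      thus ?thesis
      proof cases
        case 1
        thus ?thesis using k2[OF e2] k1[OF 1] X(3) by (metis IntI empty_iff)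
      next
        case 2
        thus ?thesis using inj_on_eq_iff[OF i2 e2 2] eE(3) by simp
      next
        case 3
        have "{u0, u2} \<inter> ends f \<noteq> {}" using eE(4) unfolding ee .
        hence "\<kappa>' f \<in> S0 \<union> S2" using HS2[OF 3] kH[OF 3] by simp
        moreover have "\<kappa>' e \<in> F2" using k2[OF e2] X(2) by blast
        ultimately show ?thesis unfolding F2_def by (metis DiffD2)
      qed
    qed
  qed
  have rng: "\<kappa>' e \<in> {1..k}" if eEE: "e \<in> E" for e
  proof -
    consider "e \<in> E1" | "e \<in> E2" | "e \<in> H" using cases[OF eEE] by blast
    thus ?thesis
    proof cases
      case 1 thus ?thesis using k1[OF 1] X(1) unfolding F1_def by blast
    next
      case 2 thus ?thesis using k2[OF 2] X(2) unfolding F2_def by blast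
    next
      case 3 thus ?thesis using kH[OF 3] colH[OF 3] by simp
    qed
  qed
  have "edge_coloring k E ends \<kappa>'"
    unfolding edge_coloring_def
  proof (intro conjI ballI impI)
    fix e assume "e \<in> E" thus "\<kappa>' e \<in> {1..k}" by (rule rng)
  next
    fix e f assume ef: "e \<in> E" "f \<in> E" "e \<noteq> f \<and> ends e \<inter> ends f \<noteq> {}"
    show "\<kappa>' e \<noteq> \<kappa>' f"
    proof (cases "e \<in> E1 \<union> E2")
      case True thus ?thesis using asym[OF True ef(2)] ef(3) by simp
    next
      case False
      show ?thesis
      proof (cases "f \<in> E1 \<union> E2")
        case True
        have fe: "ends f \<inter> ends e \<noteq> {}" using ef(3) by (simp add: Int_commute)
        have "\<kappa>' f \<noteq> \<kappa>' e" using asym[OF True ef(1) _ fe] ef(3) by auto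
        thus ?thesis by simp
      next
        case F2: False
        have "e \<in> H" "f \<in> H" using cases[OF ef(1)] cases[OF ef(2)] False F2 by blast+
        thus ?thesis using colH2[of e f] kH[of e] kH[of f] ef by simp
      qed
    qed
  qed
  moreover have "\<forall>e\<in>H. \<kappa>' e = \<kappa> e" using kH by blast
  ultimately show ?thesis unfolding H_def by (intro exI[of _ \<kappa>'] conjI)
qed

end
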